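(* Let $n\geq 1$, let $G$ be a group, and suppose that $S$ is a totally symmetric subset of $G$ with $|S| = n$. If the elements of $S$ have finite order, then $|G|\geq 2^{n-1}n!$.
   Context: A totally symmetric subset of a group $G$ is a finite subset $\{g_1,\ldots,g_n\}$ of $G$ such that (1) the elements $g_i$ pairwise commute, and (2) for every permutation $\sigma\in S_n$ there exists $h\in G$ with $hg_ih^{-1}=g_{\sigma(i)}$ for all $1\leq i\leq n$. *)

theory Defs
  imports "HOL-Algebra.Algebra" "HOL-Combinatorics.Permutations"
begin

definition totally_symmetric :: "('a, 'b) monoid_scheme \<Rightarrow> 'a set \<Rightarrow> bool" where
  "totally_symmetric G S \<longleftrightarrow>
     finite S \<and> S \<subseteq> carrier G \<and>
     (\<forall>x\<in>S. \<forall>y\<in>S. x \<otimes>\<^bsub>G\<^esub> y = y \<otimes>\<^bsub>G\<^esub> x) \<and>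
     (\<forall>\<sigma>. \<sigma> permutes S \<longrightarrow>
        (\<exists>h\<in>carrier G. \<forall>g\<in>S. h \<otimes>\<^bsub>G\<^esub> g \<otimes>\<^bsub>G\<^esub> inv\<^bsub>G\<^esub> h = \<sigma> g))"

end

theory Submission
  imports Defs
begin

context group
begin

lemma main_bound:
  assumes "n \<ge> 1"
    and "totally_symmetric G S"
    and "card S = n"
  shows "infinite (carrier G) \<or> 2 ^ (n - 1) * fact n \<le> card (carrier G)"
proof (cases "finite (carrier G)")
  case False then show ?thesis by simp
next
  case fin: True
  have finS: "finite S" and SG: "S \<subseteq> carrier G"
    and comm: "\<And>x y. x \<in> S \<Longrightarrow> y \<in> S \<Longrightarrow> x \<otimes> y = y \<otimes> x"
    and sym: "\<And>\<sigma>. \<sigma> permutes S \<Longrightarrow> \<exists>h\<in>carrier G. \<forall>g\<in>S. h \<otimes> g \<otimes> inv h = \<sigma> g"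
    using assms(2) unfolding totally_symmetric_def by auto
  define Cz where "Cz = {y \<in> carrier G. \<forall>s\<in>S. y \<otimes> s = s \<otimes> y}"
  define Z where "Z = {x \<in> carrier G. \<forall>y\<in>Cz. x \<otimes> y = y \<otimes> x}"
  have SZ: "S \<subseteq> Z" using SG unfolding Z_def Cz_def by auto
  have SCz: "S \<subseteq> Cz" using SG comm unfolding Cz_def by auto
  have ZCz: "Z \<subseteq> Cz" using SCz unfolding Z_def Cz_def by auto
  have ZG: "Z \<subseteq> carrier G" unfolding Z_def by auto
  define M where "M = G\<lparr>carrier := Z\<rparr>"
  have cM: "comm_monoid M"
  proof (rule comm_monoidI)
    fix x y assume "x \<in> carrier M" "y \<in> carrier M"
    then have x: "x \<in> Z" and y: "y \<in> Z" unfolding M_def by auto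
    have "x \<otimes> y \<in> Z" unfolding Z_def
    proof (intro CollectI conjI ballI)
      show "x \<otimes> y \<in> carrier G" using x y ZG by auto
      fix c assume c: "c \<in> Cz"
      have cG: "c \<in> carrier G" using c unfolding Cz_def by auto
      have xc: "x \<otimes> c = c \<otimes> x" and yc: "y \<otimes> c = c \<otimes> y" using x y c unfolding Z_def by auto
      have "x \<otimes> y \<otimes> c = x \<otimes> (y \<otimes> c)" using x y ZG cG by (simp add: m_assoc subsetD)
      also have "\<dots> = x \<otimes> c \<otimes> y" using x y ZG cG yc by (simp add: m_assoc subsetD)
      also have "\<dots> = c \<otimes> (x \<otimes> y)" using x y ZG cG xc by (simp add: m_assoc subsetD)
      finally show "x \<otimes> y \<otimes> c = c \<otimes> (x \<otimes> y)" .
    qed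
    then show "x \<otimes>\<^bsub>M\<^esub> y \<in> carrier M" unfolding M_def by simp
  next
    show "\<one>\<^bsub>M\<^esub> \<in> carrier M" unfolding M_def Z_def Cz_def by auto
  next
    fix x y z assume "x \<in> carrier M" "y \<in> carrier M" "z \<in> carrier M"
    then show "x \<otimes>\<^bsub>M\<^esub> y \<otimes>\<^bsub>M\<^esub> z = x \<otimes>\<^bsub>M\<^esub> (y \<otimes>\<^bsub>M\<^esub> z)"
      unfolding M_def using ZG by (simp add: m_assoc subsetD)
  next
    fix x assume "x \<in> carrier M"
    then show "\<one>\<^bsub>M\<^esub> \<otimes>\<^bsub>M\<^esub> x = x" unfolding M_def using ZG by auto
  next
    fix x y assume "x \<in> carrier M" "y \<in> carrier M"
    then show "x \<otimes>\<^bsub>M\<^esub> y = y \<otimes>\<^bsub>M\<^esub> x" unfolding M_def using ZCz unfolding Z_def by auto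
  qed
  interpret M: comm_monoid M by (rule cM)
  have multM: "\<And>x y. x \<otimes>\<^bsub>M\<^esub> y = x \<otimes> y" and oneM: "\<one>\<^bsub>M\<^esub> = \<one>" and carrM: "carrier M = Z"
    unfolding M_def by auto
  define P where "P T = finprod M id T" for T
  have PZ: "T \<subseteq> S \<Longrightarrow> P T \<in> Z" for T
    unfolding P_def using SZ carrM by (auto intro!: M.finprod_closed)
  have PCz: "T \<subseteq> S \<Longrightarrow> P T \<in> Cz" for T using PZ ZCz by auto
  have Pins: "finite T \<Longrightarrow> T \<subseteq> S \<Longrightarrow> a \<in> S \<Longrightarrow> a \<notin> T \<Longrightarrow> P (insert a T) = a \<otimes> P T" for a T
    unfolding P_def using SZ carrM multM by (subst M.finprod_insert) auto
  have Pun: "T \<subseteq> S \<Longrightarrow> U \<subseteq> S \<Longrightarrow> T \<inter> U = {} \<Longrightarrow> P (T \<union> U) = P T \<otimes> P U" for T U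
    unfolding P_def using SZ carrM multM finS
    by (subst M.finprod_Un_disjoint) (auto intro: finite_subset)
  have Pconj: "T \<subseteq> S \<Longrightarrow> h \<in> carrier G \<Longrightarrow> \<sigma> permutes S \<Longrightarrow> (\<forall>g\<in>S. h \<otimes> g \<otimes> inv h = \<sigma> g)
      \<Longrightarrow> h \<otimes> P T \<otimes> inv h = P (\<sigma> ` T)" for T h \<sigma>
  proof -
    assume T: "T \<subseteq> S" and h: "h \<in> carrier G" and sp: "\<sigma> permutes S" and hc: "\<forall>g\<in>S. h \<otimes> g \<otimes> inv h = \<sigma> g"
    have "finite T" using T finS by (rule finite_subset)
    have sZ: "\<And>x. x \<in> S \<Longrightarrow> \<sigma> x \<in> carrier M" using SZ carrM permutes_in_image[OF sp] by blast
    from \<open>finite T\<close> have "h \<otimes> P T \<otimes> inv h = finprod M \<sigma> T" using T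
    proof (induction T rule: finite_induct)
      case empty then show ?case unfolding P_def using h by (simp add: oneM)
    next
      case (insert a T)
      have sT: "\<sigma> \<in> T \<rightarrow> carrier M" using insert.prems sZ by auto
      have sa: "\<sigma> a \<in> carrier M" using insert.prems sZ by auto
      have aG: "a \<in> carrier G" using insert SG by auto
      have PT: "P T \<in> carrier G" using PZ ZG insert by auto
      have "h \<otimes> P (insert a T) \<otimes> inv h = h \<otimes> (a \<otimes> P T) \<otimes> inv h"
        using insert Pins by auto
      also have "\<dots> = (h \<otimes> a \<otimes> inv h) \<otimes> (h \<otimes> P T \<otimes> inv h)"
        using h aG PT by (simp add: m_assoc inv_solve_left)
      also have "\<dots> = \<sigma> a \<otimes> finprod M \<sigma> T" using insert hc by auto
      also have "\<dots> = finprod M \<sigma> (insert a T)"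
        using M.finprod_insert[OF insert(1,2) sT sa] multM by simp
      finally show ?case .
    qed
    also have "\<dots> = finprod M id (\<sigma> ` T)"
    proof -
      have i1: "id \<in> \<sigma> ` T \<rightarrow> carrier M" using sZ T by auto
      have i2: "inj_on \<sigma> T" using permutes_inj_on[OF sp] .
      show ?thesis using M.finprod_reindex[OF i1 i2] by simp
    qed
    finally show ?thesis unfolding P_def .
  qed
  from assms(1,3) have "S \<noteq> {}" by auto
  then obtain s0 where s0: "s0 \<in> S" by auto
  define S' where "S' = S - {s0}"
  have finS': "finite S'" using finS unfolding S'_def by auto
  have cardS': "card S' = n - 1" using assms(3) s0 finS unfolding S'_def by simp
  have Pcanc: "P U = P V" if U: "U \<subseteq> S" and V: "V \<subseteq> S" and W: "W \<subseteq> S"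
    and UW: "U \<inter> W = {}" and VW: "V \<inter> W = {}" and eq: "P (U \<union> W) = P (V \<union> W)" for U V W
  proof -
    have "P U \<otimes> P W = P V \<otimes> P W" using eq Pun U V W UW VW by simp
    moreover have "P U \<in> carrier G" "P V \<in> carrier G" "P W \<in> carrier G" using PZ ZG U V W by auto
    ultimately show ?thesis by simp
  qed
  have key: "False" if U: "U \<subseteq> S'" and V: "V \<subseteq> S'" and UV: "U \<inter> V = {}" and a: "a \<in> U"
    and eq: "P U = P V" for U V a
  proof -
    have US: "U \<subseteq> S" and VS: "V \<subseteq> S" using U V unfolding S'_def by auto
    have aS: "a \<in> S" and as0: "a \<noteq> s0" using a U unfolding S'_def by auto
    define \<sigma> where "\<sigma> = Transposition.transpose a s0"
    have sp: "\<sigma> permutes S" unfolding \<sigma>_def using aS s0 by (rule permutes_swap_id)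
    obtain h where h: "h \<in> carrier G" and hc: "\<forall>g\<in>S. h \<otimes> g \<otimes> inv h = \<sigma> g" using sym[OF sp] by auto
    have s0U: "s0 \<notin> U" and s0V: "s0 \<notin> V" using U V unfolding S'_def by auto
    have aV: "a \<notin> V" using a UV by auto
    have "\<sigma> ` V = V"
    proof -
      have "\<sigma> x = x" if "x \<in> V" for x using that aV s0V unfolding \<sigma>_def
        by (metis transpose_apply_other)
      then show ?thesis by (simp add: image_cong)
    qed
    have "\<sigma> ` U = insert s0 (U - {a})"
    proof -
      have "\<sigma> ` U = \<sigma> ` (insert a (U - {a}))" using a by (simp add: insert_absorb)
      also have "\<dots> = insert s0 (\<sigma> ` (U - {a}))" unfolding \<sigma>_def by (simp only: image_insert transpose_apply_first)
      also have "\<sigma> ` (U - {a}) = U - {a}"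
      proof -
        have "\<sigma> x = x" if "x \<in> U - {a}" for x using that s0U unfolding \<sigma>_def
          by (metis DiffE insertI1 transpose_apply_other)
        then show ?thesis by (simp add: image_cong)
      qed
      finally show ?thesis .
    qed
    have "P (\<sigma> ` U) = h \<otimes> P U \<otimes> inv h" using Pconj US h sp hc by simp
    also have "\<dots> = h \<otimes> P V \<otimes> inv h" using eq by simp
    also have "\<dots> = P (\<sigma> ` V)" using Pconj VS h sp hc by simp
    finally have e1: "P (insert s0 (U - {a})) = P V" using \<open>\<sigma> ` U = _\<close> \<open>\<sigma> ` V = V\<close> by simp
    have fU: "finite (U - {a})" using US finS by (meson finite_Diff finite_subset)
    have UaS: "U - {a} \<subseteq> S" using US by auto
    have "P U = a \<otimes> P (U - {a})" using Pins[OF fU UaS aS] a by (simp add: insert_absorb)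
    moreover have "P (insert s0 (U - {a})) = s0 \<otimes> P (U - {a})" using Pins[OF fU UaS s0] s0U by simp
    ultimately have "a \<otimes> P (U - {a}) = s0 \<otimes> P (U - {a})" using e1 eq by simp
    moreover have "P (U - {a}) \<in> carrier G" "a \<in> carrier G" "s0 \<in> carrier G" using PZ[OF UaS] ZG aS s0 SG by auto
    ultimately have "a = s0" by simp
    then show False using as0 by simp
  qed
  have Pinj: "inj_on P (Pow S')"
  proof (rule inj_onI)
    fix T T' assume T: "T \<in> Pow S'" and T': "T' \<in> Pow S'" and eq: "P T = P T'"
    have S'S: "S' \<subseteq> S" unfolding S'_def by auto
    have e: "P (T - T') = P (T' - T)"
      apply (rule Pcanc[where W = "T \<inter> T'"])
      using T T' S'S apply blast+
    proof -
      have "T - T' \<union> T \<inter> T' = T" "T' - T \<union> T \<inter> T' = T'" by blast+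
      then show "P (T - T' \<union> T \<inter> T') = P (T' - T \<union> T \<inter> T')" using eq by simp
    qed
    show "T = T'"
    proof (rule ccontr)
      assume "T \<noteq> T'"
      then obtain a where "a \<in> T - T' \<or> a \<in> T' - T" by blast
      then show False
      proof
        assume "a \<in> T - T'" then show False
          using key[of "T - T'" "T' - T" a] T T' e by auto
      next
        assume "a \<in> T' - T" then show False
          using key[of "T' - T" "T - T'" a] T T' e by auto
      qed
    qed
  qed
  define H where "H \<sigma> = (SOME h. h \<in> carrier G \<and> (\<forall>g\<in>S. h \<otimes> g \<otimes> inv h = \<sigma> g))" for \<sigma>
  have H: "\<sigma> permutes S \<Longrightarrow> H \<sigma> \<in> carrier G \<and> (\<forall>g\<in>S. H \<sigma> \<otimes> g \<otimes> inv H \<sigma> = \<sigma> g)" for \<sigma>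
  proof -
    assume "\<sigma> permutes S"
    then have "\<exists>h. h \<in> carrier G \<and> (\<forall>g\<in>S. h \<otimes> g \<otimes> inv h = \<sigma> g)" using sym by blast
    then show ?thesis unfolding H_def by (rule someI_ex)
  qed
  define F where "F p = H (fst p) \<otimes> P (snd p)" for p
  have S'S: "S' \<subseteq> S" unfolding S'_def by auto
  have conjF: "F (\<sigma>, T) \<otimes> g \<otimes> inv (F (\<sigma>, T)) = \<sigma> g"
    if sp: "\<sigma> permutes S" and T: "T \<subseteq> S'" and g: "g \<in> S" for \<sigma> T g
  proof -
    have hG: "H \<sigma> \<in> carrier G" using H[OF sp] by auto
    have PG: "P T \<in> carrier G" using PZ ZG T S'S by auto
    have gG: "g \<in> carrier G" using g SG by auto
    have pc: "P T \<otimes> g = g \<otimes> P T" using PZ[of T] T S'S g SCz unfolding Z_def by auto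
    have "F (\<sigma>, T) \<otimes> g \<otimes> inv (F (\<sigma>, T)) = H \<sigma> \<otimes> (P T \<otimes> g) \<otimes> inv (P T) \<otimes> inv (H \<sigma>)"
      unfolding F_def using hG PG gG by (simp add: m_assoc inv_mult_group)
    also have "\<dots> = H \<sigma> \<otimes> g \<otimes> inv (H \<sigma>)" using pc hG PG gG by (simp add: m_assoc)
    also have "\<dots> = \<sigma> g" using H[OF sp] g by auto
    finally show ?thesis .
  qed
  have Finj: "inj_on F ({\<sigma>. \<sigma> permutes S} \<times> Pow S')"
  proof (rule inj_onI)
    fix p q assume p: "p \<in> {\<sigma>. \<sigma> permutes S} \<times> Pow S'" and q: "q \<in> {\<sigma>. \<sigma> permutes S} \<times> Pow S'"
      and eq: "F p = F q"
    obtain \<sigma> T where pp: "p = (\<sigma>, T)" by (cases p)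
    obtain \<tau> T' where qq: "q = (\<tau>, T')" by (cases q)
    have sp: "\<sigma> permutes S" and tp: "\<tau> permutes S" and T: "T \<subseteq> S'" and T': "T' \<subseteq> S'"
      using p q pp qq by auto
    have st: "\<sigma> = \<tau>"
    proof
      fix x show "\<sigma> x = \<tau> x"
      proof (cases "x \<in> S")
        case True
        then show ?thesis using conjF[OF sp T True] conjF[OF tp T' True] eq pp qq by simp
      next
        case False
        then show ?thesis using sp tp by (simp add: permutes_not_in)
      qed
    qed
    have "H \<sigma> \<otimes> P T = H \<sigma> \<otimes> P T'" using eq pp qq st unfolding F_def by simp
    moreover have "H \<sigma> \<in> carrier G" "P T \<in> carrier G" "P T' \<in> carrier G" using H[OF sp] PZ ZG T T' S'S by auto
    ultimately have "P T = P T'" by simp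
    then have "T = T'" using Pinj T T' by (auto dest: inj_onD)
    then show "p = q" using pp qq st by simp
  qed
  have Fimg: "F ` ({\<sigma>. \<sigma> permutes S} \<times> Pow S') \<subseteq> carrier G"
  proof (rule image_subsetI)
    fix p assume "p \<in> {\<sigma>. \<sigma> permutes S} \<times> Pow S'"
    then have "fst p permutes S" "snd p \<subseteq> S" using S'S by auto
    then show "F p \<in> carrier G" unfolding F_def using H PZ ZG by blast
  qed
  have "card ({\<sigma>. \<sigma> permutes S} \<times> Pow S') = fact n * 2 ^ (n - 1)"
    using card_permutations[OF assms(3) finS] card_Pow[of S'] finS' cardS' by (simp add: card_cartesian_product)
  moreover have "card ({\<sigma>. \<sigma> permutes S} \<times> Pow S') \<le> card (carrier G)"
    using card_inj_on_le[OF Finj Fimg fin] .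
  ultimately show ?thesis by (simp add: mult.commute)
qed

end

theorem proposition2p2:
  fixes G :: "('a, 'b) monoid_scheme" and S :: "'a set" and n :: nat
  assumes "group G"
    and "n \<ge> 1"
    and "totally_symmetric G S"
    and "card S = n"
    and "\<forall>g\<in>S. \<exists>k::nat. k > 0 \<and> g [^]\<^bsub>G\<^esub> k = \<one>\<^bsub>G\<^esub>"
  shows "infinite (carrier G) \<or> 2 ^ (n - 1) * fact n \<le> card (carrier G)"
  using group.main_bound[OF assms(1-4)] .

end
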